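(* Let $G$ be a unimodular locally compact group with Haar measure $m$, and let $\nu$ be a lower translation bounded measure on $G$. Let $B_l\subseteq G$ be a compact symmetric unit neighborhood and $C_l$ a positive number such that $\nu(B_lx)\ge C_l$ for all $x\in G$. Then for every nonempty compact $A\subseteq G$, \[ \nu(B_l A)\ge \frac{C_l}{m(B_l^2)} \cdot m(A). \]
   Context: A measure is a positive Borel measure; $\nu$ is lower translation bounded if there exist $C>0$ and a compact symmetric unit neighborhood $B$ with $\inf_{x\in G}\nu(Bx)\ge C$. $B_l^2=B_lB_l$, and $B_lA=\{ba:b\in B_l,a\in A\}$. *)

theory Defs
  imports "HOL-Analysis.Analysis"
begin

text \<open>Groups are written additively (type class group_add, not necessarily
commutative): the paper's product b a is b + a, the unit is 0, inverse is uminus.\<close>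

definition topological_group :: "'a::{t2_space,group_add} itself \<Rightarrow> bool" where
  "topological_group _ \<longleftrightarrow>
     continuous_on UNIV (\<lambda>p::'a \<times> 'a. fst p + snd p) \<and>
     continuous_on UNIV (uminus :: 'a \<Rightarrow> 'a)"

definition locally_compact_group :: "'a::{t2_space,group_add} itself \<Rightarrow> bool" where
  "locally_compact_group T \<longleftrightarrow> topological_group T \<and> locally compact (UNIV :: 'a set)"

definition haar_measure :: "'a::{t2_space,group_add} measure \<Rightarrow> bool" where
  "haar_measure m \<longleftrightarrow>
     sets m = sets borel \<and>
     (\<forall>x. \<forall>A\<in>sets borel. emeasure m ((\<lambda>y. x + y) ` A) = emeasure m A) \<and>
     (\<forall>K. compact K \<longrightarrow> emeasure m K < \<infinity>) \<and>
     (\<forall>U. open U \<and> U \<noteq> {} \<longrightarrow> emeasure m U > 0) \<and>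
     (\<forall>A\<in>sets borel. emeasure m A = (INF U\<in>{U. open U \<and> A \<subseteq> U}. emeasure m U)) \<and>
     (\<forall>U. open U \<longrightarrow> emeasure m U = (SUP K\<in>{K. compact K \<and> K \<subseteq> U}. emeasure m K))"

definition unimodular_haar :: "'a::{t2_space,group_add} measure \<Rightarrow> bool" where
  "unimodular_haar m \<longleftrightarrow> haar_measure m \<and>
     (\<forall>x. \<forall>A\<in>sets borel. emeasure m ((\<lambda>y. y + x) ` A) = emeasure m A)"

definition compact_symmetric_unit_nbhd :: "'a::{t2_space,group_add} set \<Rightarrow> bool" where
  "compact_symmetric_unit_nbhd B \<longleftrightarrow> compact B \<and> uminus ` B = B \<and> 0 \<in> interior B"

definition set_times :: "'a::group_add set \<Rightarrow> 'a set \<Rightarrow> 'a set" where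
  "set_times B A = {b + a | b a. b \<in> B \<and> a \<in> A}"

definition lower_translation_bounded :: "'a::{t2_space,group_add} measure \<Rightarrow> bool" where
  "lower_translation_bounded \<nu> \<longleftrightarrow>
     (\<exists>C>0. \<exists>B. compact_symmetric_unit_nbhd B \<and>
        (\<forall>x. emeasure \<nu> ((\<lambda>b. b + x) ` B) \<ge> ennreal C))"

end

theory Submission
  imports Defs
begin

lemma ennreal_div_mult_le: "(c::ennreal) / x * x \<le> c"
  by (metis divide_le_posI_ennreal dual_order.order_iff_strict
    ennreal_divide_times le_zero_eq mult.right_neutral mult_left_le
    not_less_iff_gr_or_eq)

theorem lemma2p5:
  fixes m \<nu> :: "'a::{t2_space,group_add} measure"
    and B A :: "'a set" and C :: real
  assumes "locally_compact_group TYPE('a)"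
    and "unimodular_haar m"
    and "sets \<nu> = sets borel"
    and "lower_translation_bounded \<nu>"
    and "compact_symmetric_unit_nbhd B"
    and "C > 0"
    and "\<forall>x. emeasure \<nu> ((\<lambda>b. b + x) ` B) \<ge> ennreal C"
    and "compact A" and "A \<noteq> {}"
  shows "emeasure \<nu> (set_times B A) \<ge> ennreal C / emeasure m (set_times B B) * emeasure m A"
proof -
  have cont: "continuous_on UNIV (\<lambda>p::'a \<times> 'a. fst p + snd p)"
    using assms(1) unfolding locally_compact_group_def topological_group_def by blast
  have ctr: "continuous_on S (\<lambda>y. y + x)" for S :: "'a set" and x :: 'a
  proof -
    have c1: "continuous_on S (\<lambda>y. (y, x))" by (intro continuous_intros)
    show ?thesis using continuous_on_compose[OF c1 continuous_on_subset[OF cont subset_UNIV]] by (simp add: o_def)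
  qed
  have cB: "compact B" and symB: "uminus ` B = B" and B0: "0 \<in> B"
    using assms(5) interior_subset unfolding compact_symmetric_unit_nbhd_def by blast+
  have st: "set_times X Y = (\<lambda>p. fst p + snd p) ` (X \<times> Y)" for X Y :: "'a set"
    unfolding set_times_def by force
  have cst: "compact (set_times X Y)" if "compact X" "compact Y" for X Y :: "'a set"
    unfolding st using compact_continuous_image[OF continuous_on_subset[OF cont] compact_Times[OF that]]
    by blast
  have borel_c: "K \<in> sets borel" if "compact K" for K :: "'a set"
    using that by (simp add: compact_imp_closed borel_closed)
  have H: "haar_measure m" and rinv: "\<forall>x. \<forall>X\<in>sets borel. emeasure m ((\<lambda>y. y + x) ` X) = emeasure m X"
    using assms(2) unfolding unimodular_haar_def by simp_all
  have mA: "sets m = sets borel" using H unfolding haar_measure_def by simp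
  define T where "T x = (\<lambda>b. b + x) ` B" for x
  have cT: "compact (T x)" for x
    unfolding T_def by (intro compact_continuous_image cB ctr)
  have TBA: "T x \<subseteq> set_times B A" if "x \<in> A" for x
    using that unfolding T_def set_times_def by blast
  define BA where "BA = set_times B A"
  have BAm: "BA \<in> sets \<nu>" unfolding BA_def using assms(3) borel_c cst cB assms(8) by auto
  show ?thesis
  proof (cases "emeasure \<nu> BA = \<infinity>")
    case True then show ?thesis unfolding BA_def by simp
  next
    case False
    then obtain r where r: "emeasure \<nu> BA = ennreal r" "r \<ge> 0"
      using ennreal_cases[of "emeasure \<nu> BA"] by auto
    define S where "S = {F. F \<subseteq> A \<and> finite F \<and> disjoint_family_on T F}"
    have lowF: "of_nat (card F) * ennreal C \<le> emeasure \<nu> BA" if "F \<in> S" for F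
    proof -
      have F: "F \<subseteq> A" "finite F" "disjoint_family_on T F" using that unfolding S_def by auto
      have "of_nat (card F) * ennreal C = (\<Sum>x\<in>F. ennreal C)" by simp
      also have "\<dots> \<le> (\<Sum>x\<in>F. emeasure \<nu> (T x))"
        using assms(7) unfolding T_def by (intro sum_mono) auto
      also have "\<dots> = emeasure \<nu> (\<Union>x\<in>F. T x)"
        using F by (intro sum_emeasure) (auto simp: assms(3) borel_c cT)
      also have "\<dots> \<le> emeasure \<nu> BA"
        using F TBA BAm unfolding BA_def by (intro emeasure_mono) auto
      finally show ?thesis .
    qed
    define N where "N = nat \<lceil>r / C\<rceil>"
    have cardN: "card F \<le> N" if "F \<in> S" for F
    proof -
      have "ennreal (real (card F) * C) \<le> ennreal r"
        using lowF[OF that] r by (simp add: ennreal_mult' ennreal_of_nat_eq_real_of_nat)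
      then have "real (card F) * C \<le> r" using r(2) by (simp add: ennreal_le_iff)
      then have "real (card F) \<le> r / C" using assms(6) by (simp add: field_simps)
      then show ?thesis unfolding N_def by linarith
    qed
    have S0: "{} \<in> S" unfolding S_def disjoint_family_on_def by auto
    define K where "K = card ` S"
    have "K \<subseteq> {..N}" unfolding K_def using cardN by auto
    then have finK: "finite K" using finite_subset by blast
    have "K \<noteq> {}" unfolding K_def using S0 by auto
    then have "Max K \<in> K" using finK by (rule Max_in[rotated])
    then obtain F where FS: "F \<in> S" and Fmax: "card F = Max K" unfolding K_def by auto
    have F: "F \<subseteq> A" "finite F" "disjoint_family_on T F" using FS unfolding S_def by auto
    define D where "D x = (\<lambda>y. y + x) ` set_times B B" for x
    have cover: "A \<subseteq> (\<Union>x\<in>F. D x)"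
    proof
      fix a assume a: "a \<in> A"
      show "a \<in> (\<Union>x\<in>F. D x)"
      proof (cases "a \<in> F")
        case True
        have "0 + 0 \<in> set_times B B" using B0 unfolding set_times_def by blast
        then have "a \<in> D a" unfolding D_def by force
        then show ?thesis using True by blast
      next
        case aF: False
        have "card (insert a F) > card F" using aF F(2) by simp
        moreover have "card (insert a F) \<le> Max K" if "insert a F \<in> S"
          using that finK unfolding K_def by simp
        ultimately have "insert a F \<notin> S" using Fmax by linarith
        then have "\<not> disjoint_family_on T (insert a F)"
          using a F unfolding S_def by auto
        then obtain x where x: "x \<in> F" "T a \<inter> T x \<noteq> {}"
          using F(3) aF unfolding disjoint_family_on_def by (metis Int_commute insert_iff)
        then obtain b b' where bb: "b \<in> B" "b' \<in> B" "b + a = b' + x"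
          unfolding T_def by blast
        have "- b \<in> B" using symB bb(1) by (metis imageI)
        then have "-b + b' \<in> set_times B B" using bb(2) unfolding set_times_def by blast
        moreover have "a = (-b + b') + x"
          by (metis add.assoc bb(3) minus_add_cancel)
        ultimately have "a \<in> D x" unfolding D_def by blast
        then show ?thesis using x by blast
      qed
    qed
    have BBb: "set_times B B \<in> sets borel" using borel_c cst cB by blast
    have mD: "emeasure m (D x) = emeasure m (set_times B B)" for x
      unfolding D_def using rinv BBb by blast
    have Dm: "D x \<in> sets m" for x
      unfolding mA D_def by (intro borel_c compact_continuous_image cst cB ctr)
    have "emeasure m A \<le> emeasure m (\<Union>x\<in>F. D x)"
      using cover by (intro emeasure_mono sets.finite_UN F(2) Dm)
    also have "\<dots> \<le> (\<Sum>x\<in>F. emeasure m (D x))"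
      using F(2) Dm by (intro emeasure_subadditive_finite) auto
    also have "\<dots> = of_nat (card F) * emeasure m (set_times B B)" by (simp add: mD)
    finally have mAle: "emeasure m A \<le> of_nat (card F) * emeasure m (set_times B B)" .
    have "ennreal C / emeasure m (set_times B B) * emeasure m A
        \<le> ennreal C / emeasure m (set_times B B) * (of_nat (card F) * emeasure m (set_times B B))"
      by (intro mult_left_mono mAle) simp
    also have "\<dots> = of_nat (card F) * (ennreal C / emeasure m (set_times B B) * emeasure m (set_times B B))"
      by (simp add: ac_simps)
    also have "\<dots> \<le> of_nat (card F) * ennreal C"
      by (intro mult_left_mono ennreal_div_mult_le) simp
    also have "\<dots> \<le> emeasure \<nu> BA" using lowF[OF FS] .
    finally show ?thesis unfolding BA_def .
  qed
qed

end
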